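(* Let $n\ge1$, $\mathbf{k}=(k_1,\dots,k_n)$ positive integers, $N=n+|\mathbf{k}|$, and $D\in\mathcal{D}_{\mathbf{k}}$. Let $\sigma(D)=c_1c_2\cdots$ be the sequence of indices written by the Walking Algorithm on $(T(D),R(D))$. Then $\sigma(D)=c_1\cdots c_N$ is a permutation of $\{1,\dots,N\}$, and if $\overline{D}$ denotes the path whose $j$-th step is the $c_j$-th step of $D$ (i.e. $\texttt{SW}(\overline D)=\sigma_{c_1}\cdots\sigma_{c_N}$ where $\texttt{SW}(D)=\sigma_1\cdots\sigma_N$), then $\overline{D}\in\mathcal{D}_{\mathbf{k}'}$ for some permutation $\mathbf{k}'$ of $\mathbf{k}$, $\Phi(\overline D)=D$, and the sweep map sends the $j$-th step of $\overline D$ to the $c_j$-th step of $D$ for every $j$.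
   Context: $|\mathbf{k}|=k_1+\cdots+k_n$. $\mathcal{D}_{\mathbf{k}}$: sequences $(a_1,\dots,a_N)$ whose positive entries are $k_1,\dots,k_n$ in order, other entries $-1$, with all partial sums $r_i=a_1+\cdots+a_{i-1}$ (the rank of step $i$) nonnegative. SW-word: letter $S^{k_j}$ for up step $k_j$, $W$ for $-1$. Sweep map: for $D=(a_1,\dots,a_N)$ let $\pi$ list positions by increasing rank, ties by decreasing position; $\Phi(D)=(a_{\pi(1)},\dots,a_{\pi(N)})$ (step $\pi(j)$ goes to position $j$). Filling Algorithm: $T(D)$ has $n$ columns, column $i$ with $k_i+1$ cells in rows $1,\dots,k_i+1$. Place $1$ at top of column 1; having placed $1,\dots,i-1$, the lowest filled entry of column $j$ is active if not in row $k_j+1$; if the $i$-th letter of $\texttt{SW}(D)$ is $W$ place $i$ below the smallest active entry, else at the top of the leftmost empty column; continue until $1,\dots,N$ placed. The numbers in $T(D)$ are called indices; $t_i$ is the top index of column $i$. Ranking Algorithm: $R(D)$ has the shape of $T(D)$ and assigns each index a rank: column 1 indices get ranks $0,1,\dots,k_1$ top to bottom; for $i=2,\dots,n$, if index $t_i-1$ has rank $a$, column $i$ indices get ranks $a,a+1,\dots,a+k_i$ top to bottom. Among boxes of equal rank $r$, the largest one is the one with largest index. Walking Algorithm: go to the largest rank-$0$ box, mark it and write its index. Then repeat: if the current box is in row $1$ of column $i$, let $r$ be the rank of the bottom box (row $k_i+1$) of column $i$; otherwise let $r$ be the rank of the box directly above the current box. If there is an unmarked box of rank $r$, go to the unmarked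 rank-$r$ box with largest index, mark it and write its index; otherwise stop. *)

theory Defs
  imports Main "HOL-Library.Multiset" "HOL-Library.Product_Lexorder"
begin

(* Paths are int lists (a_1,...,a_N), stored 0-based: step i (1-based) is D ! (i-1).
   Compositions k = (k_1,...,k_n) are nat lists. *)

definition Dpaths :: "nat list \<Rightarrow> int list set" where
  "Dpaths k = {D. length D = length k + sum_list k
      \<and> filter (\<lambda>a. a > 0) D = map int k
      \<and> (\<forall>a\<in>set D. a > 0 \<or> a = -1)
      \<and> (\<forall>i<length D. sum_list (take i D) \<ge> 0)}"

definition step_rank :: "int list \<Rightarrow> nat \<Rightarrow> int" where
  "step_rank D i = sum_list (take i D)"

definition sweep_order :: "int list \<Rightarrow> nat list" where
  "sweep_order D = sort_key (\<lambda>i. (step_rank D i, - int i)) [0..<length D]"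

definition sweep :: "int list \<Rightarrow> int list" where
  "sweep D = map (\<lambda>i. D ! i) (sweep_order D)"

(* Filling algorithm. A tableau is a list of columns (0-based); each column is the
   list of its indices from top (row 1) to bottom. Letter i of SW(D) is S iff a_i > 0. *)
definition fill_step :: "nat list \<Rightarrow> nat list list \<Rightarrow> nat \<times> int \<Rightarrow> nat list list" where
  "fill_step k cols ia = (let i = fst ia; a = snd ia in
     if a > 0 then cols[(LEAST j. j < length cols \<and> cols ! j = []) := [i]]
     else (let j = arg_min (\<lambda>j. last (cols ! j))
                  (\<lambda>j. j < length cols \<and> cols ! j \<noteq> [] \<and> length (cols ! j) < k ! j + 1)
           in cols[j := cols ! j @ [i]]))"

definition filling :: "nat list \<Rightarrow> int list \<Rightarrow> nat list list" where
  "filling k D = foldl (fill_step k) (replicate (length k) []) (zip [1..<length D + 1] D)"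

definition col_of :: "nat list list \<Rightarrow> nat \<Rightarrow> nat" where
  "col_of T x = (LEAST c. c < length T \<and> x \<in> set (T ! c))"

definition row_of :: "nat list list \<Rightarrow> nat \<Rightarrow> nat" where
  "row_of T x = (LEAST r. r < length (T ! col_of T x) \<and> T ! col_of T x ! r = x)"

(* Ranking algorithm: rank of the top box of each column *)
fun col_starts :: "nat list list \<Rightarrow> nat \<Rightarrow> nat list" where
  "col_starts T 0 = [0]"
| "col_starts T (Suc i) = (let acc = col_starts T i; x = hd (T ! Suc i) - 1; c = col_of T x
     in acc @ [if c < length acc then acc ! c + row_of T x else 0])"

definition rank_box :: "nat list list \<Rightarrow> nat \<Rightarrow> nat \<Rightarrow> nat" where
  "rank_box T c r = col_starts T (length T - 1) ! c + r"

definition rank_idx :: "nat list list \<Rightarrow> nat \<Rightarrow> nat" where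
  "rank_idx T x = rank_box T (col_of T x) (row_of T x)"

(* the rank r used by the Walking Algorithm after visiting index x *)
definition next_rank :: "nat list \<Rightarrow> nat list list \<Rightarrow> nat \<Rightarrow> nat" where
  "next_rank k T x = (if row_of T x = 0 then rank_box T (col_of T x) (k ! col_of T x)
                      else rank_box T (col_of T x) (row_of T x - 1))"

(* Walking algorithm with fuel; the marked boxes are those already written *)
fun walk :: "nat list \<Rightarrow> nat list list \<Rightarrow> nat \<Rightarrow> nat \<Rightarrow> nat list \<Rightarrow> nat list" where
  "walk k T N 0 acc = acc"
| "walk k T N (Suc f) acc = (let r = next_rank k T (last acc);
      C = {x \<in> {1..N}. rank_idx T x = r \<and> x \<notin> set acc}
    in if C = {} then acc else walk k T N f (acc @ [Max C]))"

(* sigma(D): fuel N is enough, since at most N boxes can be marked *)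
definition walk_word :: "nat list \<Rightarrow> int list \<Rightarrow> nat list" where
  "walk_word k D = (let T = filling k D; N = length D
     in walk k T N N [Max {x \<in> {1..N}. rank_idx T x = 0}])"

end

theory Submission
  imports Defs
begin

lemma sum_list_pm1:
  "(\<forall>a\<in>set xs. a > 0 \<or> a = (-1::int)) \<Longrightarrow>
   sum_list xs = sum_list (filter (\<lambda>a. a>0) xs) - int (length (filter (\<lambda>a. \<not> a>0) xs))"
  by (induction xs) auto

lemma distinct_concat_col:
  assumes "distinct (concat xs)" "i < length xs" "j < length xs" "y \<in> set (xs!i)" "y \<in> set (xs!j)"
  shows "i = j"
  using assms
proof (induction xs arbitrary: i j)
  case Nil then show ?case by simp
next
  case (Cons a xs)
  have d: "set a \<inter> set (concat xs) = {}" using Cons.prems(1) by simp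
  show ?case
  proof (cases i)
    case 0
    show ?thesis
    proof (cases j)
      case (Suc j')
      have "y \<in> set (concat xs)" using Cons.prems Suc by auto
      moreover have "y \<in> set a" using Cons.prems 0 by simp
      ultimately show ?thesis using d by blast
    qed (use 0 in simp)
  next
    case (Suc i')
    show ?thesis
    proof (cases j)
      case 0
      have "y \<in> set (concat xs)" using Cons.prems Suc by auto
      moreover have "y \<in> set a" using Cons.prems 0 by simp
      ultimately show ?thesis using d by blast
    next
      case (Suc j') with \<open>i = Suc i'\<close> Cons.prems Cons.IH[of i' j'] show ?thesis by auto
    qed
  qed
qed

lemma mset_concat_upd:
  "j < length xs \<Longrightarrow> mset (concat (xs[j := xs!j @ [y]])) = mset (concat xs) + {#y#}"
proof (induction xs arbitrary: j)
  case Nil then show ?case by simp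
next
  case (Cons a xs) then show ?case by (cases j) auto
qed

lemma map_int_nat_filter: "map int (map nat (filter (\<lambda>a. a > 0) xs)) = filter (\<lambda>a. (a::int) > 0) xs"
  by (induction xs) auto

locale wk =
  fixes k :: "nat list" and D :: "int list"
  assumes kn: "length k \<ge> 1" and kpos: "\<forall>x\<in>set k. x > 0" and DD: "D \<in> Dpaths k"
begin

abbreviation "n \<equiv> length k"
abbreviation "NN \<equiv> length D"

lemma D_len: "NN = n + sum_list k" and D_filt: "filter (\<lambda>a. a>0) D = map int k"
  and D_vals: "\<forall>a\<in>set D. a>0 \<or> a = -1" and D_rank: "\<forall>i<NN. sum_list (take i D) \<ge> 0"
  using DD unfolding Dpaths_def by auto

lemma D_sum: "sum_list D = 0"
proof -
  have a: "length (filter (\<lambda>a. a>0) D) = n" using D_filt by (metis length_map)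
  have b: "length (filter (\<lambda>a. a>0) D) + length (filter (\<lambda>a. \<not> a>0) D) = NN"
    by (rule sum_length_filter_compl)
  have c: "sum_list (filter (\<lambda>a. a>0) D) = int (sum_list k)" using D_filt
    by (simp add: sum_list_of_nat)
  show ?thesis using sum_list_pm1[OF D_vals] a b c D_len by simp
qed

lemma n_pos: "0 < n" using kn by (cases k) auto

lemma k_pos: "i < n \<Longrightarrow> k!i > 0" using kpos by auto

lemma NN_ge2: "NN \<ge> 2"
proof -
  have "k \<noteq> []" using kn by auto
  hence "k!0 > 0" using k_pos[of 0] by simp
  hence "sum_list k \<ge> 1" using elem_le_sum_list[of 0 k] \<open>k \<noteq> []\<close> by simp
  thus ?thesis using D_len kn by simp
qed

lemma D_ne: "D \<noteq> []" using NN_ge2 by auto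

lemma D_nth_vals: "i < NN \<Longrightarrow> D!i > 0 \<or> D!i = -1" using D_vals by auto

lemma D0: "D!0 > 0"
proof -
  have "sum_list (take 1 D) \<ge> 0" using D_rank NN_ge2 by auto
  moreover have "take 1 D = [D!0]" using NN_ge2 by (cases D) auto
  ultimately show ?thesis using D_nth_vals[of 0] NN_ge2 D_ne by auto
qed

definition u :: "nat \<Rightarrow> nat" where "u x = length (filter (\<lambda>a. a > 0) (take x D))"

lemma u_Suc: "x < NN \<Longrightarrow> u (Suc x) = u x + (if D!x > 0 then 1 else 0)"
  by (simp add: u_def take_Suc_conv_app_nth)

lemma u_0: "u 0 = 0" by (simp add: u_def)
lemma u_1: "u 1 = 1" using D0 NN_ge2 u_Suc[of 0] u_0 D_ne by simp

lemma u_mono: assumes "x \<le> y" shows "u x \<le> u y"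
proof -
  have "take y D = take x D @ take (y-x) (drop x D)" using take_add[of x "y-x" D] assms by simp
  thus ?thesis unfolding u_def by simp
qed

lemma u_N: "u NN = n" using D_filt by (simp add: u_def)

lemma u_up: assumes "x < NN" "D!x > 0" shows "u x < n" "D!x = int (k ! u x)"
proof -
  define A where "A = take x D"
  define B where "B = drop (Suc x) D"
  define d where "d = D!x"
  have e1: "D = A @ d # B" unfolding A_def B_def d_def by (rule id_take_nth_drop[OF assms(1)])
  have "map int k = filter (\<lambda>a. a>0) A @ d # filter (\<lambda>a. a>0) B"
    using D_filt assms(2) unfolding d_def[symmetric] by (simp add: e1)
  hence "(map int k) ! u x = d" and "u x < length (map int k)"
    unfolding u_def A_def[symmetric] by (simp_all add: nth_append)
  thus "u x < n" "D!x = int (k ! u x)" unfolding d_def by auto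
qed

lemma sum_take_Suc: "x < NN \<Longrightarrow> sum_list (take (Suc x) D) = sum_list (take x D) + D!x"
  by (simp add: take_Suc_conv_app_nth)

lemma down_rank: assumes "x < NN" "\<not> D!x > 0" shows "sum_list (take x D) \<ge> 1"
proof -
  have "D!x = -1" using D_nth_vals assms by auto
  moreover have "sum_list (take (Suc x) D) \<ge> 0"
  proof (cases "Suc x < NN")
    case True then show ?thesis using D_rank by auto
  next
    case False then have "Suc x = NN" using assms by simp
    then show ?thesis using D_sum by simp
  qed
  ultimately show ?thesis using sum_take_Suc[OF assms(1)] by simp
qed


definition F :: "nat \<Rightarrow> nat list list" where
  "F x = foldl (fill_step k) (replicate n []) (zip [1..<x+1] (take x D))"

lemma F_0: "F 0 = replicate n []" by (simp add: F_def)

lemma F_Suc: assumes "x < NN" shows "F (Suc x) = fill_step k (F x) (Suc x, D!x)"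
proof -
  have "zip [1..<Suc x + 1] (take (Suc x) D) = zip [1..<x+1] (take x D) @ [(Suc x, D!x)]"
    using assms by (simp add: take_Suc_conv_app_nth zip_append)
  thus ?thesis by (simp add: F_def)
qed

lemma T_F: "filling k D = F NN" by (simp add: filling_def F_def)

lemma u_le_n: "x \<le> NN \<Longrightarrow> u x \<le> n" using u_mono[of x NN] u_N by simp

definition Inv :: "nat \<Rightarrow> bool" where
 "Inv x \<longleftrightarrow> length (F x) = n
   \<and> (\<forall>c<n. (F x ! c = []) = (u x \<le> c))
   \<and> (\<forall>c<n. length (F x ! c) \<le> k!c + 1)
   \<and> mset (concat (F x)) = mset [1..<x+1]
   \<and> (\<forall>c<n. sorted (F x ! c))
   \<and> (\<forall>c<u x. D!(hd (F x ! c) - 1) > 0 \<and> u (hd (F x ! c) - 1) = c)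
   \<and> (\<forall>c<n. \<forall>y\<in>set (tl (F x ! c)). D!(y-1) = -1)
   \<and> sum_list (take x D) = int (\<Sum>c<u x. k!c + 1 - length (F x ! c))"

lemma Inv_0: "Inv 0"
  by (simp add: Inv_def F_0 u_0)

lemma Inv_set: "Inv x \<Longrightarrow> set (concat (F x)) = {1..x}"
  unfolding Inv_def by (metis atLeastLessThanSuc_atLeastAtMost Suc_eq_plus1 set_mset_mset set_upt)

lemma Inv_elem: assumes "Inv x" "c < n" "y \<in> set (F x ! c)" shows "1 \<le> y \<and> y \<le> x"
proof -
  have "F x ! c \<in> set (F x)" using assms(1,2) unfolding Inv_def by simp
  hence "y \<in> set (concat (F x))" using assms(3) by auto
  thus ?thesis using Inv_set[OF assms(1)] by auto
qed

lemma step_up: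
  assumes "x < NN" "D!x > 0" "Inv x"
  shows "F (Suc x) = (F x)[u x := [Suc x]]" "F x ! u x = []" "u x < n"
proof -
  show un: "u x < n" using u_up assms by auto
  have em: "\<forall>c<n. (F x ! c = []) = (u x \<le> c)" and len: "length (F x) = n" using assms(3) unfolding Inv_def by auto
  show "F x ! u x = []" using em un by simp
  have "(LEAST j. j < length (F x) \<and> F x ! j = []) = u x"
    by (rule Least_equality) (use em un len in auto)
  thus "F (Suc x) = (F x)[u x := [Suc x]]" using assms F_Suc by (simp add: fill_step_def)
qed

definition Pd :: "nat \<Rightarrow> nat \<Rightarrow> bool" where
  "Pd x j \<longleftrightarrow> j < length (F x) \<and> F x ! j \<noteq> [] \<and> length (F x ! j) < k ! j + 1"

definition jd :: "nat \<Rightarrow> nat" where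
  "jd x = arg_min (\<lambda>j. last (F x ! j)) (Pd x)"

lemma step_down:
  assumes "x < NN" "\<not> D!x > 0" "Inv x"
  shows "F (Suc x) = (F x)[jd x := F x ! jd x @ [Suc x]]" "Pd x (jd x)"
    "\<And>c. Pd x c \<Longrightarrow> last (F x ! jd x) \<le> last (F x ! c)"
proof -
  have em: "\<forall>c<n. (F x ! c = []) = (u x \<le> c)" and len: "length (F x) = n"
    and sm: "sum_list (take x D) = int (\<Sum>c<u x. k!c + 1 - length (F x ! c))"
    using assms(3) unfolding Inv_def by auto
  have "(\<Sum>c<u x. k!c + 1 - length (F x ! c)) \<noteq> 0" using sm down_rank[OF assms(1,2)] by linarith
  then obtain c where c: "c < u x" "k!c + 1 - length (F x ! c) \<noteq> 0" by (meson lessThan_iff sum.neutral)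
  have "u x \<le> n" using u_le_n assms(1) by simp
  hence "Pd x c" using c em len unfolding Pd_def by auto
  from arg_min_nat_lemma[of "Pd x", OF this, of "\<lambda>j. last (F x ! j)"]
  show P: "Pd x (jd x)" and "\<And>c. Pd x c \<Longrightarrow> last (F x ! jd x) \<le> last (F x ! c)"
    unfolding jd_def by auto
  have "F (Suc x) = fill_step k (F x) (Suc x, D!x)" by (rule F_Suc[OF assms(1)])
  also have "\<dots> = (F x)[jd x := F x ! jd x @ [Suc x]]"
    unfolding fill_step_def jd_def Pd_def Let_def fst_conv snd_conv if_not_P[OF assms(2)] by (rule refl)
  finally show "F (Suc x) = (F x)[jd x := F x ! jd x @ [Suc x]]" .
qed


lemma mset_upt_Suc: "mset [1..<Suc x + 1] = mset [1..<x+1] + {#Suc x#}" by simp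

lemma Inv_Suc_up:
  assumes x: "x < NN" and up: "D!x > 0" and I: "Inv x"
  shows "Inv (Suc x)"
proof -
  note su = step_up[OF x up I]
  have uS: "u (Suc x) = Suc (u x)" using u_Suc[OF x] up by simp
  have len: "length (F x) = n" and em: "\<forall>c<n. (F x ! c = []) = (u x \<le> c)"
    and ln: "\<forall>c<n. length (F x ! c) \<le> k!c + 1"
    and ms: "mset (concat (F x)) = mset [1..<x+1]"
    and so: "\<forall>c<n. sorted (F x ! c)"
    and hd: "\<forall>c<u x. D!(hd (F x ! c) - 1) > 0 \<and> u (hd (F x ! c) - 1) = c"
    and tl: "\<forall>c<n. \<forall>y\<in>set (tl (F x ! c)). D!(y-1) = -1"
    and sm: "sum_list (take x D) = int (\<Sum>c<u x. k!c + 1 - length (F x ! c))"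
    using I unfolding Inv_def by auto
  let ?G = "F (Suc x)"
  have G: "?G = (F x)[u x := [Suc x]]" by (rule su(1))
  have Gn: "\<And>c. c \<noteq> u x \<Longrightarrow> ?G ! c = F x ! c" using G by simp
  have Gu: "?G ! u x = [Suc x]" using G su(3) len by simp
  have 1: "length ?G = n" using G len by simp
  have 2: "\<forall>c<n. (?G ! c = []) = (u (Suc x) \<le> c)"
  proof (intro allI impI)
    fix c assume c: "c < n"
    show "(?G ! c = []) = (u (Suc x) \<le> c)" using Gn[of c] Gu em c uS by (cases "c = u x") auto
  qed
  have 3: "\<forall>c<n. length (?G ! c) \<le> k!c + 1"
  proof (intro allI impI)
    fix c assume c: "c < n"
    show "length (?G ! c) \<le> k!c + 1" using Gn[of c] Gu ln c by (cases "c = u x") auto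
  qed
  have "?G = (F x)[u x := F x ! u x @ [Suc x]]" using G su(2) by simp
  hence 4: "mset (concat ?G) = mset [1..<Suc x+1]" using mset_concat_upd[of "u x" "F x" "Suc x"] len su(3) ms
    by simp
  have 5: "\<forall>c<n. sorted (?G ! c)"
  proof (intro allI impI)
    fix c assume c: "c < n"
    show "sorted (?G ! c)" using Gn[of c] Gu so c by (cases "c = u x") auto
  qed
  have 6: "\<forall>c<u (Suc x). D!(hd (?G ! c) - 1) > 0 \<and> u (hd (?G ! c) - 1) = c"
  proof (intro allI impI)
    fix c assume "c < u (Suc x)"
    hence "c < u x \<or> c = u x" using uS by auto
    thus "D!(hd (?G ! c) - 1) > 0 \<and> u (hd (?G ! c) - 1) = c"
      using Gn Gu hd up by auto
  qed
  have 7: "\<forall>c<n. \<forall>y\<in>set (tl (?G ! c)). D!(y-1) = -1"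
  proof (intro allI impI)
    fix c assume c: "c < n"
    show "\<forall>y\<in>set (tl (?G ! c)). D!(y-1) = -1" using Gn[of c] Gu tl c by (cases "c = u x") auto
  qed
  have "(\<Sum>c<u (Suc x). k!c + 1 - length (?G ! c)) = (\<Sum>c<u x. k!c + 1 - length (?G ! c)) + k!(u x)"
    using uS Gu by simp
  also have "(\<Sum>c<u x. k!c + 1 - length (?G ! c)) = (\<Sum>c<u x. k!c + 1 - length (F x ! c))"
    using Gn by (intro sum.cong) auto
  finally have 8: "sum_list (take (Suc x) D) = int (\<Sum>c<u (Suc x). k!c + 1 - length (?G ! c))"
    using sum_take_Suc[OF x] sm u_up(2)[OF x up] by simp
  show ?thesis unfolding Inv_def by (intro conjI 1 2 3 4 5 6 7 8)
qed

lemma Inv_Suc_down: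
  assumes x: "x < NN" and dn: "\<not> D!x > 0" and I: "Inv x"
  shows "Inv (Suc x)"
proof -
  note sd = step_down[OF x dn I]
  have uS: "u (Suc x) = u x" using u_Suc[OF x] dn by simp
  have Dx: "D!x = -1" using D_nth_vals x dn by auto
  have len: "length (F x) = n" and em: "\<forall>c<n. (F x ! c = []) = (u x \<le> c)"
    and ln: "\<forall>c<n. length (F x ! c) \<le> k!c + 1"
    and ms: "mset (concat (F x)) = mset [1..<x+1]"
    and so: "\<forall>c<n. sorted (F x ! c)"
    and hd: "\<forall>c<u x. D!(hd (F x ! c) - 1) > 0 \<and> u (hd (F x ! c) - 1) = c"
    and tl: "\<forall>c<n. \<forall>y\<in>set (tl (F x ! c)). D!(y-1) = -1"
    and sm: "sum_list (take x D) = int (\<Sum>c<u x. k!c + 1 - length (F x ! c))"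
    using I unfolding Inv_def by auto
  define j where "j = jd x"
  have P: "j < n" "F x ! j \<noteq> []" "length (F x ! j) < k!j + 1" using sd(2) len unfolding Pd_def j_def by auto
  have ju: "j < u x" using P em by (meson not_le)
  let ?G = "F (Suc x)"
  have G: "?G = (F x)[j := F x ! j @ [Suc x]]" using sd(1) j_def by simp
  have Gn: "\<And>c. c \<noteq> j \<Longrightarrow> ?G ! c = F x ! c" using G by simp
  have Gj: "?G ! j = F x ! j @ [Suc x]" using G P len by simp
  have 1: "length ?G = n" using G len by simp
  have 2: "\<forall>c<n. (?G ! c = []) = (u (Suc x) \<le> c)"
  proof (intro allI impI)
    fix c assume c: "c < n"
    show "(?G ! c = []) = (u (Suc x) \<le> c)" using Gn[of c] Gj em c uS ju by (cases "c = j") auto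
  qed
  have 3: "\<forall>c<n. length (?G ! c) \<le> k!c + 1"
  proof (intro allI impI)
    fix c assume c: "c < n"
    show "length (?G ! c) \<le> k!c + 1" using Gn[of c] Gj ln c P by (cases "c = j") auto
  qed
  have 4: "mset (concat ?G) = mset [1..<Suc x+1]" using mset_concat_upd[of j "F x" "Suc x"] len P ms G
    by simp
  have "\<forall>y\<in>set (F x ! j). y \<le> Suc x" using Inv_elem[OF I P(1)] by fastforce
  hence "sorted (?G ! j)" using Gj so P(1) by (simp add: sorted_append)
  hence 5: "\<forall>c<n. sorted (?G ! c)" using Gn so by (metis)
  have 6: "\<forall>c<u (Suc x). D!(hd (?G ! c) - 1) > 0 \<and> u (hd (?G ! c) - 1) = c"
  proof (intro allI impI)
    fix c assume c: "c < u (Suc x)"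
    show "D!(hd (?G ! c) - 1) > 0 \<and> u (hd (?G ! c) - 1) = c" using Gn[of c] Gj hd c uS P(2) by (cases "c = j") auto
  qed
  have tj: "tl (?G ! j) = tl (F x ! j) @ [Suc x]" using Gj P(2) by simp
  have 7: "\<forall>c<n. \<forall>y\<in>set (tl (?G ! c)). D!(y-1) = -1"
  proof (intro allI impI)
    fix c assume c: "c < n"
    show "\<forall>y\<in>set (tl (?G ! c)). D!(y-1) = -1" using Gn[of c] tj tl c Dx P(1) by (cases "c = j") auto
  qed
  let ?t = "\<lambda>c. k!c + 1 - length (F x ! c)" and ?t' = "\<lambda>c. k!c + 1 - length (?G ! c)"
  have "(\<Sum>c<u x. ?t c) = ?t j + (\<Sum>c\<in>{..<u x} - {j}. ?t c)" using ju by (simp add: sum.remove)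
  moreover have "(\<Sum>c<u x. ?t' c) = ?t' j + (\<Sum>c\<in>{..<u x} - {j}. ?t' c)" using ju by (simp add: sum.remove)
  moreover have "(\<Sum>c\<in>{..<u x} - {j}. ?t' c) = (\<Sum>c\<in>{..<u x} - {j}. ?t c)" using Gn by (intro sum.cong) auto
  moreover have "?t j = ?t' j + 1" using Gj P(3) by simp
  ultimately have "(\<Sum>c<u x. ?t c) = (\<Sum>c<u x. ?t' c) + 1" by simp
  hence 8: "sum_list (take (Suc x) D) = int (\<Sum>c<u (Suc x). k!c + 1 - length (?G ! c))"
    using sum_take_Suc[OF x] sm Dx uS by simp
  show ?thesis unfolding Inv_def by (intro conjI 1 2 3 4 5 6 7 8)
qed

lemma Inv_all: "x \<le> NN \<Longrightarrow> Inv x"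
proof (induction x)
  case 0 show ?case by (rule Inv_0)
next
  case (Suc x)
  then have "x < NN" "Inv x" by auto
  then show ?case using Inv_Suc_up Inv_Suc_down by blast
qed


definition T :: "nat list list" where "T = F NN"

lemma T_filling: "filling k D = T" by (simp add: T_def T_F)

lemma IT: "Inv NN" by (rule Inv_all) simp

lemma T_len: "length T = n" using IT unfolding Inv_def T_def by simp

lemma T_mset: "mset (concat T) = mset [1..<NN+1]" using IT unfolding Inv_def T_def by simp

lemma T_dist: "distinct (concat T)" using T_mset mset_eq_imp_distinct_iff[of "concat T" "[1..<NN+1]"] by simp

lemma T_set: "set (concat T) = {1..NN}" using Inv_set[OF IT] T_def by simp

lemma T_col_len: assumes "c < n" shows "length (T!c) = k!c + 1"
proof -
  have ln: "\<forall>c<n. length (T ! c) \<le> k!c + 1"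
    and sm: "sum_list (take NN D) = int (\<Sum>c<u NN. k!c + 1 - length (T ! c))"
    using IT unfolding Inv_def T_def by auto
  have "sum_list (take NN D) = 0" using D_sum by simp
  hence "int (\<Sum>c<u NN. k!c + 1 - length (T ! c)) = 0" using sm by linarith
  hence "(\<Sum>c<u NN. k!c + 1 - length (T ! c)) = 0" by (simp only: of_nat_eq_0_iff)
  hence "(\<Sum>c<n. k!c + 1 - length (T ! c)) = 0" using u_N by simp
  hence "k!c + 1 - length (T ! c) = 0" using assms by (simp only: sum_eq_0_iff finite_lessThan lessThan_iff)
  thus ?thesis using ln assms by (meson diff_is_0_eq le_antisym)
qed

lemma T_ne: "c < n \<Longrightarrow> T!c \<noteq> []" using T_col_len by fastforce

lemma T_sorted: "c < n \<Longrightarrow> sorted (T!c)" using IT unfolding Inv_def T_def by simp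

lemma T_hd: "c < n \<Longrightarrow> D!(hd (T!c) - 1) > 0 \<and> u (hd (T!c) - 1) = c"
  using IT u_N unfolding Inv_def T_def by simp

lemma T_tl: "c < n \<Longrightarrow> y \<in> set (tl (T!c)) \<Longrightarrow> D!(y-1) = -1"
  using IT unfolding Inv_def T_def by simp

lemma T_col_dist: "c < n \<Longrightarrow> distinct (T!c)"
  using T_dist T_len by (simp add: distinct_concat_iff)

lemma T_elem: assumes "c < n" "r < length (T!c)" shows "1 \<le> T!c!r \<and> T!c!r \<le> NN"
proof -
  have "T!c \<in> set T" using assms T_len by simp
  moreover have "T!c!r \<in> set (T!c)" using assms by simp
  ultimately have "T!c!r \<in> set (concat T)" by auto
  thus ?thesis using T_set by auto
qed

lemma colrow: assumes "c < n" "r < length (T!c)"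
  shows "col_of T (T!c!r) = c" "row_of T (T!c!r) = r"
proof -
  show cc: "col_of T (T!c!r) = c" unfolding col_of_def
  proof (rule Least_equality)
    show "c < length T \<and> T ! c ! r \<in> set (T ! c)" using assms T_len by simp
    fix c' assume "c' < length T \<and> T ! c ! r \<in> set (T ! c')"
    hence "c' = c" using distinct_concat_col[OF T_dist, of c' c "T!c!r"] assms T_len by simp
    thus "c \<le> c'" by simp
  qed
  show "row_of T (T!c!r) = r" unfolding row_of_def cc
  proof (rule Least_equality)
    show "r < length (T ! c) \<and> T ! c ! r = T ! c ! r" using assms by simp
    fix r' assume "r' < length (T ! c) \<and> T ! c ! r' = T ! c ! r"
    hence "r' = r" using T_col_dist[OF assms(1)] assms(2) nth_eq_iff_index_eq by blast
    thus "r \<le> r'" by simp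
  qed
qed

lemma elem_pos: assumes "y \<in> {1..NN}" obtains c r where "c < n" "r < length (T!c)" "T!c!r = y"
proof -
  have "y \<in> set (concat T)" using assms T_set by simp
  then obtain cs where "cs \<in> set T" "y \<in> set cs" by auto
  then obtain c where c: "c < n" "T!c = cs" using T_len by (metis in_set_conv_nth)
  then obtain r where "r < length (T!c)" "T!c!r = y" using \<open>y \<in> set cs\<close> by (metis in_set_conv_nth)
  thus ?thesis using that c by blast
qed

lemma F_Suc_upd: assumes "y < NN" shows "\<exists>j<n. F (Suc y) = (F y)[j := F y!j @ [Suc y]]"
proof (cases "D!y > 0")
  case True
  note su = step_up[OF assms True Inv_all]
  show ?thesis using su assms by (intro exI[of _ "u y"]) auto
next
  case False
  note sd = step_down[OF assms False Inv_all]
  have "jd y < n" using sd(2) Inv_all[of y] assms unfolding Pd_def Inv_def by auto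
  then show ?thesis using sd assms by (intro exI[of _ "jd y"]) auto
qed

lemma F_prefix: "x \<le> y \<Longrightarrow> y \<le> NN \<Longrightarrow> c < n \<Longrightarrow> \<exists>ys. F y ! c = F x ! c @ ys"
proof (induction y)
  case 0 then show ?case by simp
next
  case (Suc y)
  show ?case
  proof (cases "x = Suc y")
    case True then show ?thesis by simp
  next
    case False
    then obtain ys where ys: "F y ! c = F x ! c @ ys" using Suc by fastforce
    have "y < NN" using Suc.prems by simp
    then obtain j where j: "j < n" "F (Suc y) = (F y)[j := F y!j @ [Suc y]]" using F_Suc_upd by blast
    have "length (F y) = n" using Inv_all[of y] Suc unfolding Inv_def by simp
    then show ?thesis using j ys by (cases "c = j") auto
  qed
qed

lemma T_prefix: "x \<le> NN \<Longrightarrow> c < n \<Longrightarrow> \<exists>ys. T ! c = F x ! c @ ys"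
  using F_prefix[of x NN c] T_def by simp

lemma T_prefix_nth: "x \<le> NN \<Longrightarrow> c < n \<Longrightarrow> r < length (F x ! c) \<Longrightarrow> T!c!r = F x ! c ! r \<and> r < length (T!c)"
  using T_prefix[of x c] by (auto simp: nth_append)

lemma cs_len: "length (col_starts T i) = Suc i"
  by (induction i) (simp_all add: Let_def)

lemma cs_prefix: "j \<le> i \<Longrightarrow> col_starts T i ! j = col_starts T j ! j"
proof (induction i)
  case 0 then show ?case by simp
next
  case (Suc i)
  show ?case
  proof (cases "j = Suc i")
    case True then show ?thesis by simp
  next
    case False
    then have "j < length (col_starts T i)" using Suc cs_len by simp
    then show ?thesis using Suc False by (simp add: Let_def nth_append)
  qed
qed

definition s :: "nat \<Rightarrow> nat" where "s c = col_starts T c ! c"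

lemma s_0: "s 0 = 0" by (simp add: s_def)

lemma s_Suc: "s (Suc c) = (if col_of T (hd (T!Suc c) - 1) < Suc c
     then s (col_of T (hd (T!Suc c) - 1)) + row_of T (hd (T!Suc c) - 1) else 0)"
proof -
  have "s (Suc c) = (let acc = col_starts T c; x = hd (T ! Suc c) - 1; c' = col_of T x
     in if c' < length acc then acc ! c' + row_of T x else 0)"
    unfolding s_def using cs_len[of c] by (simp add: Let_def nth_append)
  thus ?thesis using cs_len[of c] cs_prefix[of _ c] unfolding s_def Let_def by auto
qed

lemma rank_box_s: "c < n \<Longrightarrow> rank_box T c r = s c + r"
  unfolding rank_box_def s_def using T_len cs_prefix[of c "n - 1"] by simp

lemma rho_pos: assumes "c < n" "r < length (T!c)" shows "rank_idx T (T!c!r) = s c + r"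
  unfolding rank_idx_def using colrow[OF assms] rank_box_s assms by simp

lemma T_hd_nth: "c < n \<Longrightarrow> hd (T!c) = T!c!0" using T_ne by (simp add: hd_conv_nth)

lemma hd_ge1: "c < n \<Longrightarrow> hd (T!c) \<ge> 1" using T_elem[of c 0] T_hd_nth T_col_len by simp

lemma hd0: "hd (T!0) = 1"
proof -
  have n0: "0 < n" by (rule n_pos)
  let ?h = "hd (T!0)"
  have "u (?h - 1) = 0" using T_hd[OF n0] by simp
  moreover have "?h - 1 \<ge> 1 \<Longrightarrow> u (?h - 1) \<ge> 1" using u_mono u_1 by metis
  ultimately show ?thesis using hd_ge1[OF n0] by linarith
qed

lemma hd_mono: assumes "c < c'" "c' < n" shows "hd (T!c) < hd (T!c')"
proof (rule ccontr)
  assume "\<not> hd (T!c) < hd (T!c')"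
  hence "hd (T!c') - 1 \<le> hd (T!c) - 1" by simp
  hence "u (hd (T!c') - 1) \<le> u (hd (T!c) - 1)" by (rule u_mono)
  thus False using T_hd[of c] T_hd[of c'] assms by simp
qed

lemma s_hd: assumes "1 \<le> c" "c < n"
  shows "s c = rank_idx T (hd (T!c) - 1)" "hd (T!c) \<ge> 2"
proof -
  show h2: "hd (T!c) \<ge> 2" using hd_mono[of 0 c] assms hd0 by simp
  let ?y = "hd (T!c) - 1"
  have "?y \<in> {1..NN}" using h2 T_elem[of c 0] T_hd_nth[of c] T_col_len assms by auto
  then obtain c' r' where cr: "c' < n" "r' < length (T!c')" "T!c'!r' = ?y" by (rule elem_pos)
  have "hd (T!c') \<le> ?y" using T_sorted[OF cr(1)] cr T_hd_nth[OF cr(1)] by (metis le0 sorted_nth_mono)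
  hence "hd (T!c') < hd (T!c)" using h2 by simp
  hence "c' < c" using hd_mono[of c c'] cr(1) by (metis linorder_neqE_nat order_less_asym)
  obtain d where d: "c = Suc d" using assms by (cases c) auto
  have "s c = s c' + r'" using s_Suc[of d] d colrow[OF cr(1,2)] cr(3) \<open>c' < c\<close> by simp
  thus "s c = rank_idx T ?y" using rho_pos[OF cr(1,2)] cr(3) by simp
qed


abbreviation rho :: "nat \<Rightarrow> nat" where "rho \<equiv> rank_idx T"
abbreviation nr :: "nat \<Rightarrow> nat" where "nr \<equiv> next_rank k T"

lemma rho_hd: "c < n \<Longrightarrow> rho (hd (T!c)) = s c"
  using rho_pos[of c 0] T_hd_nth T_col_len by simp

lemma rho_1: "rho 1 = 0" using rho_hd[OF n_pos] hd0 s_0 by simp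

lemma chain_mono:
  fixes f :: "nat \<Rightarrow> nat"
  assumes "\<forall>y. 1 \<le> y \<longrightarrow> y < x \<longrightarrow> f y \<le> f (Suc y)" "1 \<le> y" "y \<le> z" "z \<le> x"
  shows "f y \<le> f z"
  using assms(3,4)
proof (induction z)
  case 0 then show ?case by simp
next
  case (Suc z)
  show ?case
  proof (cases "y = Suc z")
    case True then show ?thesis by simp
  next
    case False
    then have "y \<le> z" using Suc by simp
    then have "f y \<le> f z" using Suc by simp
    also have "f z \<le> f (Suc z)" using assms(1,2) \<open>y \<le> z\<close> Suc by simp
    finally show ?thesis .
  qed
qed

definition M :: "nat \<Rightarrow> bool" where
  "M x \<longleftrightarrow> (\<forall>y. 1 \<le> y \<longrightarrow> y < x \<longrightarrow> rho y \<le> rho (Suc y))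
        \<and> (\<forall>c<n. F x ! c \<noteq> [] \<and> length (F x ! c) \<le> k!c \<longrightarrow> rho x \<le> rho (last (F x ! c)) + 1)"

lemma M_1: "M 1"
proof -
  have "0 < NN" using NN_ge2 by linarith
  hence F1: "F 1 = (F 0)[0 := [1]]" using step_up[OF _ D0 Inv_0] u_0 by simp
  have "\<forall>c<n. F 1 ! c \<noteq> [] \<longrightarrow> c = 0" using F1 F_0 n_pos by (auto simp: nth_list_update)
  moreover have "F 1 ! 0 = [1]" using F1 F_0 n_pos by simp
  ultimately show ?thesis unfolding M_def by auto
qed

lemma M_Suc: assumes x1: "1 \<le> x" and x: "x < NN" and Mx: "M x" shows "M (Suc x)"
proof -
  have I: "Inv x" using Inv_all x by simp
  have ch: "\<forall>y. 1 \<le> y \<longrightarrow> y < x \<longrightarrow> rho y \<le> rho (Suc y)"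
    and act: "\<forall>c<n. F x ! c \<noteq> [] \<and> length (F x ! c) \<le> k!c \<longrightarrow> rho x \<le> rho (last (F x ! c)) + 1"
    using Mx unfolding M_def by auto
  have lenF: "length (F x) = n" using I unfolding Inv_def by simp
  show ?thesis
  proof (cases "D!x > 0")
    case True
    note su = step_up[OF x True I]
    have u1: "1 \<le> u x" using u_mono[OF x1] u_1 by simp
    have "F (Suc x) ! u x = [Suc x]" using su lenF by simp
    hence "T!(u x)!0 = Suc x" using T_prefix_nth[of "Suc x" "u x" 0] x su(3) by simp
    hence "hd (T!(u x)) = Suc x" using T_hd_nth su(3) by simp
    hence rs: "rho (Suc x) = rho x" using s_hd[OF u1 su(3)] rho_hd[OF su(3)] by simp
    show ?thesis unfolding M_def
    proof (intro conjI allI impI)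
      fix y assume "1 \<le> y" "y < Suc x"
      thus "rho y \<le> rho (Suc y)" using ch rs by (cases "y = x") auto
    next
      fix c assume c: "c < n" "F (Suc x) ! c \<noteq> [] \<and> length (F (Suc x) ! c) \<le> k ! c"
      show "rho (Suc x) \<le> rho (last (F (Suc x) ! c)) + 1"
      proof (cases "c = u x")
        case True then show ?thesis using \<open>F (Suc x) ! u x = [Suc x]\<close> by simp
      next
        case False
        then have "F (Suc x) ! c = F x ! c" using su by simp
        then show ?thesis using act c rs by simp
      qed
    qed
  next
    case False
    note sd = step_down[OF x False I]
    define j where "j = jd x"
    have P: "j < n" "F x ! j \<noteq> []" "length (F x ! j) < k!j + 1" using sd(2) lenF unfolding Pd_def j_def by auto
    define r where "r = length (F x ! j)"
    have r1: "r \<ge> 1" using P(2) r_def by (cases "F x ! j") auto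
    have Gj: "F (Suc x) ! j = F x ! j @ [Suc x]" using sd(1) P lenF j_def by simp
    have "T!j!r = Suc x \<and> r < length (T!j)" using T_prefix_nth[of "Suc x" j r] x P(1) Gj r_def by simp
    hence a: "rho (Suc x) = s j + r" using rho_pos[OF P(1), of r] by simp
    have "T!j!(r-1) = last (F x ! j) \<and> r - 1 < length (T!j)"
      using T_prefix_nth[of "Suc x" j "r-1"] x P(1) Gj r_def r1 P(2)
      by (simp add: last_conv_nth nth_append)
    hence b: "rho (last (F x ! j)) = s j + (r - 1)" using rho_pos[OF P(1), of "r-1"] by simp
    have rs: "rho (Suc x) = rho (last (F x ! j)) + 1" using a b r1 by simp
    have pact: "rho x \<le> rho (last (F x ! j)) + 1" using act P by simp
    have mono: "\<And>y z. 1 \<le> y \<Longrightarrow> y \<le> z \<Longrightarrow> z \<le> x \<Longrightarrow> rho y \<le> rho z"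
      using chain_mono[OF ch] by blast
    have pin: "1 \<le> last (F x ! j) \<and> last (F x ! j) \<le> x" using Inv_elem[OF I P(1)] P(2) by simp
    show ?thesis unfolding M_def
    proof (intro conjI allI impI)
      fix y assume "1 \<le> y" "y < Suc x"
      thus "rho y \<le> rho (Suc y)" using ch rs pact by (cases "y = x") auto
    next
      fix c assume c: "c < n" "F (Suc x) ! c \<noteq> [] \<and> length (F (Suc x) ! c) \<le> k ! c"
      show "rho (Suc x) \<le> rho (last (F (Suc x) ! c)) + 1"
      proof (cases "c = j")
        case True then show ?thesis using Gj by simp
      next
        case False
        then have e: "F (Suc x) ! c = F x ! c" using sd(1) j_def by simp
        hence "Pd x c" using c lenF unfolding Pd_def by simp
        hence "last (F x ! j) \<le> last (F x ! c)" using sd(3) j_def by simp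
        moreover have "last (F x ! c) \<le> x" using Inv_elem[OF I c(1)] c(2) e by simp
        ultimately have "rho (last (F x ! j)) \<le> rho (last (F x ! c))" using mono pin by blast
        then show ?thesis using rs e by simp
      qed
    qed
  qed
qed

lemma M_all: "1 \<le> x \<Longrightarrow> x \<le> NN \<Longrightarrow> M x"
proof (induction x)
  case 0 then show ?case by simp
next
  case (Suc x)
  show ?case
  proof (cases "x = 0")
    case True then show ?thesis using M_1 by simp
  next
    case False then show ?thesis using Suc M_Suc by simp
  qed
qed

lemma rho_mono: "1 \<le> y \<Longrightarrow> y \<le> z \<Longrightarrow> z \<le> NN \<Longrightarrow> rho y \<le> rho z"
  using M_all[of NN] NN_ge2 chain_mono[of NN rho y z] unfolding M_def by simp

lemma nr_pos: assumes "c < n" "r < length (T!c)"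
  shows "nr (T!c!r) = (if r = 0 then s c + k!c else s c + r - 1)"
    "D!(T!c!r - 1) = (if r = 0 then int (k!c) else -1)"
proof -
  note cr = colrow[OF assms]
  show "nr (T!c!r) = (if r = 0 then s c + k!c else s c + r - 1)"
    unfolding next_rank_def cr using rank_box_s[OF assms(1)] by simp
  show "D!(T!c!r - 1) = (if r = 0 then int (k!c) else -1)"
  proof (cases "r = 0")
    case True
    have h: "D!(hd (T!c) - 1) > 0" "u (hd (T!c) - 1) = c" using T_hd[OF assms(1)] by auto
    have te: "1 \<le> T!c!0 \<and> T!c!0 \<le> NN" using T_elem[OF assms(1), of 0] assms(2) True by simp
    have "T!c!0 - 1 < NN" using te by linarith
    hence "hd (T!c) - 1 < NN" using T_hd_nth[OF assms(1)] by simp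
    then show ?thesis using u_up(2)[OF _ h(1)] h(2) True T_hd_nth[OF assms(1)] by simp
  next
    case False
    have l: "r - 1 < length (tl (T!c))" using assms False by simp
    hence "tl (T!c) ! (r-1) = T!c!r" using False by (simp add: nth_tl)
    hence "T!c!r \<in> set (tl (T!c))" using l by (metis nth_mem)
    then show ?thesis using T_tl[OF assms(1)] False by simp
  qed
qed

lemma nr_rho: assumes "y \<in> {1..NN}" shows "int (nr y) = int (rho y) + D!(y-1)"
proof -
  obtain c r where cr: "c < n" "r < length (T!c)" "T!c!r = y" using elem_pos assms by blast
  show ?thesis using nr_pos[OF cr(1,2)] rho_pos[OF cr(1,2)] cr(3) by (cases "r = 0") auto
qed

lemma min_down: assumes "y \<in> {1..NN}" "rho y > 0" "\<forall>z\<in>{1..NN}. rho z = rho y \<longrightarrow> y \<le> z"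
  shows "nr y = rho y - 1"
proof -
  obtain c r where cr: "c < n" "r < length (T!c)" "T!c!r = y" using elem_pos assms by blast
  have "r \<noteq> 0"
  proof
    assume r0: "r = 0"
    hence yh: "y = hd (T!c)" using cr T_hd_nth by simp
    show False
    proof (cases "c = 0")
      case True then show False using yh hd0 rho_1 assms(2) by simp
    next
      case False
      hence "s c = rho (y - 1)" "y \<ge> 2" using s_hd[of c] cr yh by auto
      moreover have "rho y = s c" using rho_hd cr yh by simp
      ultimately have e: "rho (y - 1) = rho y" by simp
      have m: "y - 1 \<in> {1..NN}" using \<open>y \<ge> 2\<close> assms(1) by auto
      have "y \<le> y - 1" using assms(3) m e by blast
      thus False using \<open>y \<ge> 2\<close> by simp
    qed
  qed
  thus ?thesis using nr_pos[OF cr(1,2)] rho_pos[OF cr(1,2)] cr(3) by simp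
qed

lemma mset_concat_map_eq:
  "(\<forall>x\<in>set xs. mset (map f x) = mset (map g x)) \<Longrightarrow> mset (map f (concat xs)) = mset (map g (concat xs))"
  by (induction xs) auto

lemma balance: "mset (map rho [1..<NN+1]) = mset (map nr [1..<NN+1])"
proof -
  have col: "mset (map rho (T!c)) = mset (map nr (T!c))" if c: "c < n" for c
  proof -
    have "map rho (T!c) = map (\<lambda>r. s c + r) [0..<k!c+1]"
      using rho_pos[OF c] T_col_len[OF c] by (intro nth_equalityI) (auto simp del: upt_Suc)
    moreover have "map nr (T!c) = (s c + k!c) # map (\<lambda>r. s c + r) [0..<k!c]"
    proof (rule nth_equalityI)
      show "length (map nr (T!c)) = length ((s c + k!c) # map (\<lambda>r. s c + r) [0..<k!c])"
        using T_col_len[OF c] by simp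
      fix i assume "i < length (map nr (T!c))"
      then show "map nr (T!c) ! i = ((s c + k!c) # map (\<lambda>r. s c + r) [0..<k!c]) ! i"
        using nr_pos(1)[OF c, of i] T_col_len[OF c] by (cases i) auto
    qed
    ultimately show ?thesis by simp
  qed
  have "\<forall>x\<in>set T. mset (map rho x) = mset (map nr x)" using col T_len by (metis in_set_conv_nth)
  hence "mset (map rho (concat T)) = mset (map nr (concat T))" by (rule mset_concat_map_eq)
  thus ?thesis using T_mset by (metis mset_map)
qed


definition WI :: "nat list \<Rightarrow> bool" where
 "WI acc \<longleftrightarrow> acc \<noteq> [] \<and> distinct acc \<and> set acc \<subseteq> {1..NN} \<and> rho (acc!0) = 0
   \<and> (\<forall>i. Suc i < length acc \<longrightarrow> rho (acc ! Suc i) = nr (acc ! i))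
   \<and> (\<forall>i<length acc. \<forall>y\<in>{1..NN}. rho y = rho (acc!i) \<and> y \<notin> set (take i acc) \<longrightarrow> y \<le> acc!i)"

lemma WI_len: "WI acc \<Longrightarrow> length acc \<le> NN"
proof -
  assume "WI acc"
  hence "distinct acc" "set acc \<subseteq> {1..NN}" unfolding WI_def by auto
  hence "card (set acc) \<le> card {1..NN}" by (intro card_mono) auto
  thus ?thesis using distinct_card[OF \<open>distinct acc\<close>] by simp
qed

lemma WI_snoc:
  assumes W: "WI acc" and C: "C = {x \<in> {1..NN}. rho x = nr (last acc) \<and> x \<notin> set acc}" and ne: "C \<noteq> {}"
  shows "WI (acc @ [Max C])"
proof -
  have fin: "finite C" using C by simp
  have mC: "Max C \<in> C" using Max_in[OF fin ne] .
  have mge: "\<And>y. y \<in> C \<Longrightarrow> y \<le> Max C" using Max_ge[OF fin] by simp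
  have a: "acc \<noteq> []" "distinct acc" "set acc \<subseteq> {1..NN}" "rho (acc!0) = 0"
    and ch: "\<forall>i. Suc i < length acc \<longrightarrow> rho (acc ! Suc i) = nr (acc ! i)"
    and mx: "\<forall>i<length acc. \<forall>y\<in>{1..NN}. rho y = rho (acc!i) \<and> y \<notin> set (take i acc) \<longrightarrow> y \<le> acc!i"
    using W unfolding WI_def by auto
  let ?a = "acc @ [Max C]"
  have l0: "0 < length acc" using a(1) by simp
  have 1: "?a \<noteq> []" "distinct ?a" "set ?a \<subseteq> {1..NN}" "rho (?a!0) = 0"
    using a mC C l0 by (auto simp: nth_append)
  have 2: "\<forall>i. Suc i < length ?a \<longrightarrow> rho (?a ! Suc i) = nr (?a ! i)"
  proof (intro allI impI)
    fix i assume i: "Suc i < length ?a"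
    show "rho (?a ! Suc i) = nr (?a ! i)"
    proof (cases "Suc i < length acc")
      case True then show ?thesis using ch by (simp add: nth_append)
    next
      case False
      hence "Suc i = length acc" using i by simp
      hence iu: "i = length acc - 1" "i < length acc" by auto
      have "?a ! Suc i = Max C" using \<open>Suc i = length acc\<close> by (simp add: nth_append)
      moreover have "?a ! i = acc ! i" using iu by (simp add: nth_append)
      moreover have "last acc = acc ! i" using iu a(1) by (simp add: last_conv_nth)
      ultimately have "?a ! Suc i = Max C" "?a ! i = last acc" by auto
      then show ?thesis using mC C by simp
    qed
  qed
  have 3: "\<forall>i<length ?a. \<forall>y\<in>{1..NN}. rho y = rho (?a!i) \<and> y \<notin> set (take i ?a) \<longrightarrow> y \<le> ?a!i"
  proof (intro allI impI ballI)
    fix i y assume i: "i < length ?a" and y: "y \<in> {1..NN}" and h: "rho y = rho (?a!i) \<and> y \<notin> set (take i ?a)"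
    show "y \<le> ?a!i"
    proof (cases "i < length acc")
      case True then show ?thesis using mx y h by (simp add: nth_append)
    next
      case False
      hence "i = length acc" using i by simp
      hence "?a ! i = Max C" "take i ?a = acc" by auto
      hence "y \<in> C" using h y C mC by simp
      thus ?thesis using mge \<open>?a ! i = Max C\<close> by simp
    qed
  qed
  show ?thesis unfolding WI_def using 1 2 3 by blast
qed

lemma walk_WI: "WI acc \<Longrightarrow> NN < length acc + f \<Longrightarrow>
   WI (walk k T NN f acc) \<and> (\<forall>y\<in>{1..NN}. rho y = nr (last (walk k T NN f acc)) \<longrightarrow> y \<in> set (walk k T NN f acc))"
proof (induction f arbitrary: acc)
  case 0 then show ?case using WI_len by fastforce
next
  case (Suc f)
  define C where "C = {x \<in> {1..NN}. rho x = nr (last acc) \<and> x \<notin> set acc}"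
  have we: "walk k T NN (Suc f) acc = (if C = {} then acc else walk k T NN f (acc @ [Max C]))"
    unfolding C_def by (simp only: walk.simps Let_def)
  show ?case
  proof (cases "C = {}")
    case True
    hence "walk k T NN (Suc f) acc = acc" using we by simp
    then show ?thesis using True Suc.prems unfolding C_def by auto
  next
    case False
    hence e: "walk k T NN (Suc f) acc = walk k T NN f (acc @ [Max C])" using we by simp
    have "WI (acc @ [Max C])" using WI_snoc[OF Suc.prems(1) C_def False] .
    moreover have "NN < length (acc @ [Max C]) + f" using Suc.prems by simp
    ultimately show ?thesis using Suc.IH e by simp
  qed
qed

definition W :: "nat list" where "W = walk_word k D"

lemma W_walk: "W = walk k T NN NN [Max {x \<in> {1..NN}. rho x = 0}]"
  unfolding W_def walk_word_def Let_def T_filling by simp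

lemma W_props: "WI W" "\<forall>y\<in>{1..NN}. rho y = nr (last W) \<longrightarrow> y \<in> set W"
proof -
  let ?S = "{x \<in> {1..NN}. rho x = 0}"
  have ne: "1 \<in> ?S" using rho_1 NN_ge2 by simp
  have fin: "finite ?S" by simp
  have m: "Max ?S \<in> ?S" using Max_in[OF fin] ne by blast
  have "WI [Max ?S]" unfolding WI_def using m Max_ge[OF fin] by auto
  hence "WI W \<and> (\<forall>y\<in>{1..NN}. rho y = nr (last W) \<longrightarrow> y \<in> set W)"
    using walk_WI[of "[Max ?S]" NN] W_walk NN_ge2 by simp
  thus "WI W" "\<forall>y\<in>{1..NN}. rho y = nr (last W) \<longrightarrow> y \<in> set W" by auto
qed

lemma count_map_distinct: "distinct xs \<Longrightarrow> count (mset (map f xs)) r = card {x \<in> set xs. f x = r}"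
proof (induction xs)
  case Nil then show ?case by simp
next
  case (Cons x xs)
  show ?case
  proof (cases "f x = r")
    case True
    hence "{y \<in> set (x#xs). f y = r} = insert x {y \<in> set xs. f y = r}" by auto
    moreover have "x \<notin> {y \<in> set xs. f y = r}" using Cons.prems by simp
    ultimately show ?thesis using Cons True by simp
  next
    case False
    hence "{y \<in> set (x#xs). f y = r} = {y \<in> set xs. f y = r}" by auto
    then show ?thesis using Cons False by simp
  qed
qed

lemma W_set: "set W = {1..NN}"
proof -
  have WI: "WI W" by (rule W_props(1))
  have ne: "W \<noteq> []" and dW: "distinct W" and sW: "set W \<subseteq> {1..NN}" and r0: "rho (W!0) = 0"
    and ch: "\<forall>i. Suc i < length W \<longrightarrow> rho (W ! Suc i) = nr (W ! i)"
    and mx: "\<forall>i<length W. \<forall>y\<in>{1..NN}. rho y = rho (W!i) \<and> y \<notin> set (take i W) \<longrightarrow> y \<le> W!i"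
    using WI unfolding WI_def by auto
  define v where "v = nr (last W)"
  have st: "\<forall>y\<in>{1..NN}. rho y = v \<longrightarrow> y \<in> set W" using W_props(2) v_def by simp
  have e1: "map rho W = 0 # map nr (butlast W)"
  proof (rule nth_equalityI)
    show "length (map rho W) = length (0 # map nr (butlast W))" using ne by simp
    fix i assume "i < length (map rho W)"
    then show "map rho W ! i = (0 # map nr (butlast W)) ! i"
      using r0 ch by (cases i) (auto simp: nth_butlast)
  qed
  have "map nr (butlast W @ [last W]) = map nr (butlast W) @ [nr (last W)]" by simp
  hence e2: "map nr W = map nr (butlast W) @ [nr (last W)]" by (simp only: append_butlast_last_id[OF ne])
  have cid: "count (mset (map rho W)) r + (if r = v then 1 else 0) = count (mset (map nr W)) r + (if r = 0 then 1 else 0)" for r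
    using e1 e2 v_def by simp
  define cW where "cW f r = card {x \<in> set W. f x = r}" for f :: "nat \<Rightarrow> nat" and r
  define cV where "cV f r = card {x \<in> {1..NN}. f x = r}" for f :: "nat \<Rightarrow> nat" and r
  have cWc: "count (mset (map f W)) r = cW f r" for f r using count_map_distinct[OF dW] cW_def by simp
  have sU: "set [1..<NN+1] = {1..NN}" by auto
  have cVc: "count (mset (map f [1..<NN+1])) r = cV f r" for f r
  proof -
    have "count (mset (map f [1..<NN+1])) r = card {x \<in> set [1..<NN+1]. f x = r}"
      by (rule count_map_distinct) simp
    also have "\<dots> = cV f r" unfolding cV_def sU ..
    finally show ?thesis .
  qed
  have bal: "cV rho r = cV nr r" for r
  proof -
    have "count (mset (map rho [1..<NN+1])) r = count (mset (map nr [1..<NN+1])) r" by (simp only: balance)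
    thus ?thesis by (simp only: cVc)
  qed
  have sub: "{x \<in> set W. f x = r} \<subseteq> {x \<in> {1..NN}. f x = r}" for f :: "nat \<Rightarrow> nat" and r using sW by auto
  have le: "cW f r \<le> cV f r" for f r unfolding cW_def cV_def using sub by (intro card_mono) auto
  have cid': "cW rho r + (if r = v then 1 else 0) = cW nr r + (if r = 0 then 1 else 0)" for r
    using cid[of r] cWc by simp
  have stv: "cW rho v = cV rho v"
  proof -
    have "{x \<in> set W. rho x = v} = {x \<in> {1..NN}. rho x = v}" using st sW by auto
    thus ?thesis unfolding cW_def cV_def by simp
  qed
  have v0: "v = 0"
  proof (rule ccontr)
    assume "v \<noteq> 0"
    hence "cW rho v + 1 = cW nr v" using cid'[of v] by simp
    moreover have "cW nr v \<le> cV nr v" by (rule le)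
    ultimately show False using bal[of v] stv by simp
  qed
  have eqc: "cW rho r = cW nr r" for r using cid'[of r] v0 by (cases "r = 0") auto
  have all: "\<forall>y\<in>{1..NN}. rho y = r \<longrightarrow> y \<in> set W" for r
  proof (induction r)
    case 0 then show ?case using st v0 by simp
  next
    case (Suc r)
    show ?case
    proof (rule ccontr)
      assume "\<not> (\<forall>y\<in>{1..NN}. rho y = Suc r \<longrightarrow> y \<in> set W)"
      then obtain y where y: "y \<in> {1..NN}" "rho y = Suc r" "y \<notin> set W" by blast
      define S where "S = {z \<in> {1..NN}. rho z = Suc r}"
      have finS: "finite S" unfolding S_def by simp
      have yS: "y \<in> S" using y S_def by simp
      define m where "m = Min S"
      have mS: "m \<in> S" using Min_in[OF finS] yS m_def by blast
      have mle: "\<And>z. z \<in> S \<Longrightarrow> m \<le> z" using Min_le[OF finS] m_def by simp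
      have mW: "m \<notin> set W"
      proof
        assume "m \<in> set W"
        then obtain i where i: "i < length W" "W!i = m" by (metis in_set_conv_nth)
        have "y \<notin> set (take i W)" using y(3) by (meson in_set_takeD)
        hence "y \<le> m" using mx i y mS S_def by auto
        moreover have "m \<le> y" using mle yS by simp
        ultimately show False using y(3) \<open>m \<in> set W\<close> by simp
      qed
      have "nr m = rho m - 1"
        by (rule min_down) (use mS mle S_def in auto)
      hence nm: "nr m = r" using mS S_def by simp
      have "{x \<in> set W. nr x = r} \<subset> {x \<in> {1..NN}. nr x = r}"
        using sub[of nr r] mW nm mS S_def by blast
      hence "cW nr r < cV nr r" unfolding cW_def cV_def by (intro psubset_card_mono) auto
      hence "cW rho r < cV rho r" using eqc bal by simp
      hence "{x \<in> set W. rho x = r} \<noteq> {x \<in> {1..NN}. rho x = r}" unfolding cW_def cV_def by auto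
      then show False using Suc.IH sub[of rho r] by blast
    qed
  qed
  show ?thesis using all sW by blast
qed

lemma W_dist: "distinct W" using W_props(1) unfolding WI_def by simp

lemma W_len: "length W = NN"
  using distinct_card[OF W_dist] W_set by simp

lemma W_ch: "Suc i < NN \<Longrightarrow> rho (W ! Suc i) = nr (W ! i)"
  using W_props(1) W_len unfolding WI_def by simp

lemma W_0: "rho (W!0) = 0" using W_props(1) unfolding WI_def by simp

lemma W_dec: assumes "i < j" "j < NN" "rho (W!i) = rho (W!j)" shows "W!j < W!i"
proof -
  have mx: "\<forall>i<length W. \<forall>y\<in>{1..NN}. rho y = rho (W!i) \<and> y \<notin> set (take i W) \<longrightarrow> y \<le> W!i"
    using W_props(1) unfolding WI_def by simp
  have "W!j \<in> set W" using W_len assms by simp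
  hence "W!j \<in> {1..NN}" using W_set by simp
  moreover have "W!j \<notin> set (take i W)"
  proof
    assume "W!j \<in> set (take i W)"
    then obtain i' where "i' < length (take i W)" "take i W ! i' = W!j" by (metis in_set_conv_nth)
    hence "i' < i" "W!i' = W!j" using assms by auto
    moreover have "i' < NN" "i < NN" using \<open>i' < i\<close> assms by auto
    ultimately have "i' = j" using nth_eq_iff_index_eq[OF W_dist, of i' j] assms W_len by simp
    thus False using \<open>i' < i\<close> assms by simp
  qed
  ultimately have "W!j \<le> W!i" using mx assms W_len by auto
  moreover have "W!j \<noteq> W!i" using nth_eq_iff_index_eq[OF W_dist, of j i] assms W_len by simp
  ultimately show ?thesis by simp
qed


definition Dbar :: "int list" where "Dbar = map (\<lambda>c. D ! (c - 1)) W"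

lemma Dbar_len: "length Dbar = NN" using W_len Dbar_def by simp

lemma Dbar_nth: "p < NN \<Longrightarrow> Dbar ! p = D ! (W!p - 1)" using W_len Dbar_def by simp

lemma W_in: "p < NN \<Longrightarrow> W!p \<in> {1..NN}" using W_set W_len nth_mem[of p W] by simp

lemma Dbar_rank: "p < NN \<Longrightarrow> sum_list (take p Dbar) = int (rho (W!p))"
proof (induction p)
  case 0 then show ?case using W_0 by simp
next
  case (Suc p)
  have "sum_list (take (Suc p) Dbar) = sum_list (take p Dbar) + Dbar ! p"
    using Suc.prems Dbar_len by (simp add: take_Suc_conv_app_nth)
  also have "\<dots> = int (rho (W!p)) + D ! (W!p - 1)" using Suc Dbar_nth by simp
  also have "\<dots> = int (nr (W!p))" using nr_rho[OF W_in[of p]] Suc.prems by simp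
  also have "\<dots> = int (rho (W ! Suc p))" using W_ch Suc.prems by simp
  finally show ?case .
qed

lemma mset_W: "mset W = mset [1..<NN+1]"
  using set_eq_iff_mset_eq_distinct[OF W_dist, of "[1..<NN+1]"] W_set by auto

lemma mset_Dbar: "mset Dbar = mset D"
proof -
  have "mset Dbar = image_mset (\<lambda>c. D ! (c - 1)) (mset W)" unfolding Dbar_def by simp
  also have "\<dots> = mset (map (\<lambda>c. D ! (c - 1)) [1..<NN+1])" using mset_W by simp
  also have "map (\<lambda>c. D ! (c - 1)) [1..<NN+1] = D" by (rule nth_equalityI) (auto simp del: upt_Suc)
  finally show ?thesis .
qed

definition k' :: "nat list" where "k' = map nat (filter (\<lambda>a. a > 0) Dbar)"

lemma k'_mset: "mset k' = mset k"
proof -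
  have "mset (filter (\<lambda>a. a > 0) Dbar) = mset (filter (\<lambda>a. a > 0) D)"
    using mset_Dbar by (simp add: mset_filter)
  also have "\<dots> = mset (map int k)" using D_filt by simp
  finally have "mset k' = image_mset nat (mset (map int k))" unfolding k'_def by simp
  also have "\<dots> = mset k" by (simp add: multiset.map_comp comp_def)
  finally show ?thesis .
qed

lemma Dbar_Dpaths: "Dbar \<in> Dpaths k'"
proof -
  have "size (mset k') = size (mset k)" using k'_mset by simp
  hence l: "length k' = n" by simp
  have "sum_mset (mset k') = sum_mset (mset k)" using k'_mset by simp
  hence sk: "sum_list k' = sum_list k" by (simp add: sum_mset_sum_list)
  have f: "filter (\<lambda>a. a > 0) Dbar = map int k'"
    unfolding k'_def by (rule map_int_nat_filter[symmetric])
  have "set_mset (mset Dbar) = set_mset (mset D)" using mset_Dbar by simp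
  hence "set Dbar = set D" by simp
  hence v: "\<forall>a\<in>set Dbar. a > 0 \<or> a = -1" using D_vals by simp
  have r: "\<forall>i<length Dbar. sum_list (take i Dbar) \<ge> 0" using Dbar_rank Dbar_len by simp
  show ?thesis unfolding Dpaths_def using l sk f v r Dbar_len D_len by simp
qed

definition jq :: "nat \<Rightarrow> nat" where "jq q = (THE j. j < NN \<and> W!j = Suc q)"

lemma jq: assumes "q < NN" shows "jq q < NN" "W ! (jq q) = Suc q"
proof -
  have "Suc q \<in> set W" using W_set assms by simp
  then obtain j where j0: "j < length W" "W!j = Suc q" by (auto simp: in_set_conv_nth)
  hence j: "j < NN" "W!j = Suc q" using W_len by auto
  have u: "j' = j" if h: "j' < NN \<and> W!j' = Suc q" for j'
  proof -
    have "W!j' = W!j" using h j by simp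
    moreover have "j' < length W" "j < length W" using h j W_len by auto
    ultimately show ?thesis using nth_eq_iff_index_eq[OF W_dist, of j' j] by simp
  qed
  have "jq q = j" unfolding jq_def
  proof (rule the_equality)
    show "j < NN \<and> W!j = Suc q" using j by simp
    fix j' assume "j' < NN \<and> W!j' = Suc q"
    thus "j' = j" by (rule u)
  qed
  thus "jq q < NN" "W ! (jq q) = Suc q" using j by auto
qed

lemma jq_W: assumes "j < NN" shows "jq (W!j - 1) = j" "W!j - 1 < NN"
proof -
  have w: "1 \<le> W!j" "W!j \<le> NN" using W_in[OF assms] by auto
  show q: "W!j - 1 < NN" using w by linarith
  have "W ! jq (W!j - 1) = W!j" using jq(2)[OF q] w by simp
  moreover have "jq (W!j - 1) < length W" "j < length W" using jq(1)[OF q] assms W_len by auto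
  ultimately show "jq (W!j - 1) = j" using nth_eq_iff_index_eq[OF W_dist, of "jq (W!j - 1)" j] by simp
qed

lemma sweep_order_Dbar: "sweep_order Dbar = map jq [0..<NN]"
proof -
  let ?key = "\<lambda>i. (step_rank Dbar i, - int i)"
  have "sort_key ?key [0..<NN] = map jq [0..<NN]"
  proof (rule sort_key_inj_key_eq)
    have inj: "inj_on jq (set [0..<NN])"
    proof (rule inj_onI)
      fix a b assume ab: "a \<in> set [0..<NN]" "b \<in> set [0..<NN]" "jq a = jq b"
      have "Suc a = W ! jq a" using jq(2)[of a] ab(1) by simp
      also have "\<dots> = W ! jq b" using ab(3) by simp
      also have "\<dots> = Suc b" using jq(2)[of b] ab(2) by simp
      finally show "a = b" by simp
    qed
    have d: "distinct (map jq [0..<NN])" unfolding distinct_map using inj by simp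
    have st: "set (map jq [0..<NN]) = set [0..<NN]"
    proof
      show "set (map jq [0..<NN]) \<subseteq> set [0..<NN]" using jq(1) by auto
      show "set [0..<NN] \<subseteq> set (map jq [0..<NN])"
      proof
        fix j assume "j \<in> set [0..<NN]"
        hence j: "j < NN" by simp
        hence "jq (W!j - 1) = j" "W!j - 1 < NN" using jq_W by auto
        hence "W!j - 1 \<in> set [0..<NN]" by simp
        hence "jq (W!j - 1) \<in> set (map jq [0..<NN])" by simp
        thus "j \<in> set (map jq [0..<NN])" using \<open>jq (W!j - 1) = j\<close> by simp
      qed
    qed
    show "mset [0..<NN] = mset (map jq [0..<NN])"
      using iffD1[OF set_eq_iff_mset_eq_distinct[OF distinct_upt d] st[symmetric]] .
    show "inj_on ?key (set [0..<NN])" by (auto intro!: inj_onI)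
    show "sorted (map ?key (map jq [0..<NN]))"
      unfolding sorted_iff_nth_mono
    proof (intro allI impI)
      fix a b assume ab: "a \<le> b" "b < length (map ?key (map jq [0..<NN]))"
      hence b: "b < NN" and a: "a < NN" by auto
      have ka: "step_rank Dbar (jq a) = int (rho (Suc a))"
        unfolding step_rank_def using Dbar_rank[OF jq(1)[OF a]] jq(2)[OF a] by simp
      have kb: "step_rank Dbar (jq b) = int (rho (Suc b))"
        unfolding step_rank_def using Dbar_rank[OF jq(1)[OF b]] jq(2)[OF b] by simp
      have m: "rho (Suc a) \<le> rho (Suc b)" using rho_mono ab b by simp
      have "jq b \<le> jq a" if eq: "rho (Suc a) = rho (Suc b)"
      proof (rule ccontr)
        assume "\<not> jq b \<le> jq a"
        hence "jq a < jq b" by simp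
        moreover have "rho (W ! jq a) = rho (W ! jq b)" using eq jq(2) a b by simp
        ultimately have "W ! jq b < W ! jq a" using W_dec jq(1)[OF b] by blast
        thus False using jq(2) a b ab by simp
      qed
      hence jj: "rho (Suc a) = rho (Suc b) \<Longrightarrow> - int (jq a) \<le> - int (jq b)" by simp
      have ea: "map ?key (map jq [0..<NN]) ! a = (int (rho (Suc a)), - int (jq a))" using a ka by simp
      have eb: "map ?key (map jq [0..<NN]) ! b = (int (rho (Suc b)), - int (jq b))" using b kb by simp
      have "(int (rho (Suc a)), - int (jq a)) \<le> (int (rho (Suc b)), - int (jq b))"
      proof (cases "rho (Suc a) < rho (Suc b)")
        case True then show ?thesis by (simp only: less_eq_prod_simp of_nat_less_iff simp_thms)
      next
        case False
        hence e: "rho (Suc a) = rho (Suc b)" using m by simp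
        show ?thesis unfolding less_eq_prod_simp using jj[OF e] e by simp
      qed
      then show "map ?key (map jq [0..<NN]) ! a \<le> map ?key (map jq [0..<NN]) ! b"
        unfolding ea eb .
    qed
  qed
  thus ?thesis unfolding sweep_order_def Dbar_len .
qed

lemma sweep_Dbar: "sweep Dbar = D"
proof -
  have "sweep Dbar = map (\<lambda>q. Dbar ! jq q) [0..<NN]" unfolding sweep_def sweep_order_Dbar by simp
  also have "\<dots> = map (\<lambda>q. D ! q) [0..<NN]"
    using jq Dbar_nth by (intro map_cong) auto
  also have "\<dots> = D" by (rule map_nth)
  finally show ?thesis .
qed

lemma sweep_pos: "j < NN \<Longrightarrow> sweep_order Dbar ! (W ! j - 1) = j"
  using sweep_order_Dbar jq_W by simp

end

theorem mainTheorem4: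
  fixes k :: "nat list" and D :: "int list"
  assumes "length k \<ge> 1" and "\<forall>x\<in>set k. x > 0" and "D \<in> Dpaths k"
  shows "let N = length k + sum_list k; \<sigma> = walk_word k D;
             Dbar = map (\<lambda>c. D ! (c - 1)) \<sigma>
         in distinct \<sigma> \<and> set \<sigma> = {1..N}
            \<and> (\<exists>k'. mset k' = mset k \<and> Dbar \<in> Dpaths k')
            \<and> sweep Dbar = D
            \<and> (\<forall>j<N. sweep_order Dbar ! (\<sigma> ! j - 1) = j)"
proof -
  interpret wk k D using assms by unfold_locales
  have N: "length k + sum_list k = length D" using D_len by simp
  have ex: "\<exists>k'. mset k' = mset k \<and> Dbar \<in> Dpaths k'" using k'_mset Dbar_Dpaths by blast
  have al: "\<forall>j<length D. sweep_order Dbar ! (W ! j - 1) = j" using sweep_pos by blast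
  have "distinct W \<and> set W = {1..length D}
            \<and> (\<exists>k'. mset k' = mset k \<and> Dbar \<in> Dpaths k')
            \<and> sweep Dbar = D
            \<and> (\<forall>j<length D. sweep_order Dbar ! (W ! j - 1) = j)"
    using W_dist W_set ex sweep_Dbar al by (intro conjI)
  thus ?thesis unfolding Let_def N W_def Dbar_def .
qed

end
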